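(* Let $B_R(0)\subset B_{2R}(0)\subset\mathbb{R}^n$ be concentric balls, with volumes $\|B_R(0)\|$ and $\|B_{2R}(0)\setminus B_R(0)\|$ of $B_R(0)$ and of the annulus, and let $\psi$ be harmonic on $B_{2R}(0)$ satisfying the Caccioppoli estimate $$\int_{B_R(0)}|\nabla_i\psi(x)|^2d^nx\le\frac{4}{R^2}\int_{B_{2R}(0)\setminus B_R(0)}|\psi(x)|^2d^nx .$$ Let $\mathbb{F}$ be a mean-square differentiable Gaussian random scalar field on $B_{2R}(0)$ with $\mathsf{E}[\mathbb{F}(x)]=0$, $\mathsf{E}[\mathbb{F}(x)\mathbb{F}(x)]=\alpha>0$ and $\mathsf{E}[\nabla_i\mathbb{F}(x)\nabla_j\mathbb{F}(x)]=\delta_{ij}\beta$, normalised so that $\mathsf{E}[|\nabla_i\mathbb{F}(x)|^2]=\beta$ after summation over $i$. For $\lambda>0$ put $\overline{\psi}=\psi+\lambda\mathbb{F}$. Then the stochastically averaged Caccioppoli estimate $$\mathsf{E}\Big[\int_{B_R(0)}|\nabla_i\overline{\psi}(x)|^2d^nx\Big]\le\frac{4}{R^2}\,\mathsf{E}\Big[\int_{B_{2R}(0)\setminus B_R(0)}|\overline{\psi}(x)|^2d^nx\Big]$$ holds if $$\frac{R^2}{4}\Big(\frac{\beta}{\alpha}\Big)\le\frac{\|B_{2R}(0)\setminus B_R(0)\|}{\|B_R(0)\|}.$$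
   Context: $(\Omega,\mathscr{F},\mathsf{P})$ is a probability space, $\mathsf{E}$ its expectation. A Gaussian random scalar field on a set $S$ is a family of jointly Gaussian real random variables $\mathbb{F}(x)$, $x\in S$; mean-square differentiability means $\nabla_i\mathbb{F}$ exists as a mean-square limit, and integrals of the field and its gradient exist and commute with expectation. $|\nabla_i u|^2=\sum_i(\partial_iu)^2$. *)

theory Defs
  imports "HOL-Probability.Probability"
begin

definition grad :: "('a::euclidean_space \<Rightarrow> real) \<Rightarrow> 'a \<Rightarrow> 'a" where
  "grad f x = (\<Sum>i\<in>Basis. frechet_derivative f (at x) i *\<^sub>R i)"

definition laplacian :: "('a::euclidean_space \<Rightarrow> real) \<Rightarrow> 'a \<Rightarrow> real" where
  "laplacian f x = (\<Sum>i\<in>Basis. frechet_derivative (grad f) (at x) i \<bullet> i)"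

definition harmonic_on :: "'a::euclidean_space set \<Rightarrow> ('a \<Rightarrow> real) \<Rightarrow> bool" where
  "harmonic_on S f \<longleftrightarrow> open S \<and>
     (\<forall>x\<in>S. f differentiable (at x)) \<and>
     (\<forall>x\<in>S. grad f differentiable (at x)) \<and>
     (\<forall>i\<in>Basis. \<forall>j\<in>Basis. continuous_on S (\<lambda>y. frechet_derivative (grad f) (at y) i \<bullet> j)) \<and>
     (\<forall>x\<in>S. laplacian f x = 0)"

text \<open>Gaussian random field on S: every finite linear combination of field values is
  normally distributed (possibly degenerate, i.e. almost surely constant).\<close>

definition gaussian_field :: "'w measure \<Rightarrow> 'a set \<Rightarrow> ('w \<Rightarrow> 'a \<Rightarrow> real) \<Rightarrow> bool" where
  "gaussian_field M S F \<longleftrightarrow>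
     (\<forall>I c. finite I \<and> I \<subseteq> S \<longrightarrow>
        (let Y = (\<lambda>\<omega>. \<Sum>x\<in>I. c x * F \<omega> x) in
          (\<exists>\<mu> \<sigma>. \<sigma> > 0 \<and> distributed M lborel Y (normal_density \<mu> \<sigma>)) \<or>
          (\<exists>a. AE \<omega> in M. Y \<omega> = a)))"

definition ms_gradient :: "'w measure \<Rightarrow> 'a::euclidean_space set \<Rightarrow> ('w \<Rightarrow> 'a \<Rightarrow> real) \<Rightarrow> ('w \<Rightarrow> 'a \<Rightarrow> 'a) \<Rightarrow> bool" where
  "ms_gradient M S F G \<longleftrightarrow>
     (\<forall>x\<in>S. integrable M (\<lambda>\<omega>. (F \<omega> x)\<^sup>2) \<and> (\<forall>i\<in>Basis. integrable M (\<lambda>\<omega>. (G \<omega> x \<bullet> i)\<^sup>2))) \<and>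
     (\<forall>x\<in>S. \<forall>i\<in>Basis.
        ((\<lambda>h. \<integral>\<omega>. ((F \<omega> (x + h *\<^sub>R i) - F \<omega> x) / h - G \<omega> x \<bullet> i)\<^sup>2 \<partial>M) \<longlongrightarrow> 0) (at 0))"

end

theory Submission
  imports Defs
begin

lemma sq3: "((p::real) - q - r)^2 \<le> 3*(p^2+q^2+r^2)"
proof -
  have "0 \<le> (p+q)^2+(p+r)^2+(q-r)^2" by simp
  then show ?thesis by (simp add: power2_eq_square algebra_simps)
qed

lemma meanzero_grad:
  fixes F :: "'w \<Rightarrow> 'a::euclidean_space \<Rightarrow> real" and G :: "'w \<Rightarrow> 'a \<Rightarrow> 'a"
  assumes P: "prob_space M" and S: "open S" and x: "x \<in> S" and i: "i \<in> Basis"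
    and Fm: "\<And>y. y \<in> S \<Longrightarrow> (\<lambda>\<omega>. F \<omega> y) \<in> borel_measurable M"
    and Gm: "(\<lambda>\<omega>. G \<omega> x \<bullet> i) \<in> borel_measurable M"
    and msd: "ms_gradient M S F G"
    and mean0: "\<forall>x\<in>S. integrable M (\<lambda>\<omega>. F \<omega> x) \<and> (\<integral>\<omega>. F \<omega> x \<partial>M) = 0"
  shows "(\<integral>\<omega>. G \<omega> x \<bullet> i \<partial>M) = 0"
proof -
  interpret prob_space M by fact
  define c where "c = (\<integral>\<omega>. G \<omega> x \<bullet> i \<partial>M)"
  have Gsq: "integrable M (\<lambda>\<omega>. (G \<omega> x \<bullet> i)\<^sup>2)" using msd x i unfolding ms_gradient_def by blast
  have Gi: "integrable M (\<lambda>\<omega>. G \<omega> x \<bullet> i)"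
    by (rule square_integrable_imp_integrable[OF Gm Gsq])
  have lim: "((\<lambda>h. \<integral>\<omega>. ((F \<omega> (x + h *\<^sub>R i) - F \<omega> x) / h - G \<omega> x \<bullet> i)\<^sup>2 \<partial>M) \<longlongrightarrow> 0) (at 0)"
    using msd x i unfolding ms_gradient_def by blast
  obtain e where e: "e > 0" "ball x e \<subseteq> S" using S x open_contains_ball by blast
  have ev: "eventually (\<lambda>h. h \<noteq> 0 \<and> x + h *\<^sub>R i \<in> S) (at (0::real))"
    unfolding eventually_at
  proof -
    have "\<forall>h. h \<noteq> 0 \<and> dist h 0 < e \<longrightarrow> h \<noteq> 0 \<and> x + h *\<^sub>R i \<in> S"
    proof (intro allI impI)
      fix h :: real assume h: "h \<noteq> 0 \<and> dist h 0 < e"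
      then have "dist x (x + h *\<^sub>R i) < e" using i by (simp add: dist_norm)
      then show "h \<noteq> 0 \<and> x + h *\<^sub>R i \<in> S" using e h by auto
    qed
    then show "\<exists>d>0. \<forall>h\<in>UNIV. h \<noteq> 0 \<and> dist h 0 < d \<longrightarrow> h \<noteq> 0 \<and> x + h *\<^sub>R i \<in> S"
      using e by auto
  qed
  have "eventually (\<lambda>h. c^2 \<le> (\<integral>\<omega>. ((F \<omega> (x + h *\<^sub>R i) - F \<omega> x) / h - G \<omega> x \<bullet> i)\<^sup>2 \<partial>M)) (at (0::real))"
    using ev
  proof eventually_elim
    case (elim h)
    define y where "y = x + h *\<^sub>R i"
    have y: "y \<in> S" using elim y_def by simp
    define D where "D = (\<lambda>\<omega>. (F \<omega> y - F \<omega> x) / h - G \<omega> x \<bullet> i)"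
    have Fy: "integrable M (\<lambda>\<omega>. F \<omega> y)" and Fx: "integrable M (\<lambda>\<omega>. F \<omega> x)"
      using mean0 x y by auto
    have Fy0: "(\<integral>\<omega>. F \<omega> y \<partial>M) = 0" and Fx0: "(\<integral>\<omega>. F \<omega> x \<partial>M) = 0"
      using mean0 x y by auto
    have Fy2: "integrable M (\<lambda>\<omega>. (F \<omega> y)\<^sup>2)" and Fx2: "integrable M (\<lambda>\<omega>. (F \<omega> x)\<^sup>2)"
      using msd x y unfolding ms_gradient_def by auto
    have DI: "integrable M D" unfolding D_def using Fy Fx Gi by auto
    have ED: "(\<integral>\<omega>. D \<omega> \<partial>M) = - c"
      unfolding D_def c_def using Fy Fx Gi Fy0 Fx0
      by (simp add: Bochner_Integration.integral_diff Bochner_Integration.integral_divide)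
    have Dm: "D \<in> borel_measurable M" using DI by auto
    have D2: "integrable M (\<lambda>\<omega>. (D \<omega>)\<^sup>2)"
    proof (rule Bochner_Integration.integrable_bound)
      show "integrable M (\<lambda>\<omega>. 3 * ((F \<omega> y / h)\<^sup>2 + (F \<omega> x / h)\<^sup>2 + (G \<omega> x \<bullet> i)\<^sup>2))"
        using Fy2 Fx2 Gsq by (auto simp: power_divide)
      show "(\<lambda>\<omega>. (D \<omega>)\<^sup>2) \<in> borel_measurable M" using Dm by measurable
      show "AE \<omega> in M. norm ((D \<omega>)\<^sup>2) \<le> norm (3 * ((F \<omega> y / h)\<^sup>2 + (F \<omega> x / h)\<^sup>2 + (G \<omega> x \<bullet> i)\<^sup>2))"
        using sq3 unfolding D_def by (auto simp: diff_divide_distrib)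
    qed
    have "0 \<le> variance D" by (simp add: integral_nonneg_AE)
    also have "variance D = (\<integral>\<omega>. (D \<omega>)\<^sup>2 \<partial>M) - c^2"
      using variance_eq[OF DI D2] ED by simp
    finally show ?case unfolding D_def y_def by simp
  qed
  then have "c^2 \<le> 0"
    by (intro tendsto_le[OF _ lim tendsto_const]) auto
  then show ?thesis unfolding c_def by simp
qed


lemma pw_G:
  fixes G :: "'w \<Rightarrow> 'a::euclidean_space \<Rightarrow> 'a" and g :: 'a
  assumes P: "prob_space M"
    and Gm: "\<And>i. i \<in> Basis \<Longrightarrow> (\<lambda>\<omega>. G \<omega> x \<bullet> i) \<in> borel_measurable M"
    and Gsq: "\<And>i. i \<in> Basis \<Longrightarrow> integrable M (\<lambda>\<omega>. (G \<omega> x \<bullet> i)\<^sup>2)"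
    and G0: "\<And>i. i \<in> Basis \<Longrightarrow> (\<integral>\<omega>. G \<omega> x \<bullet> i \<partial>M) = 0"
    and gcov: "\<forall>i\<in>Basis. \<forall>j\<in>Basis.
                 (\<integral>\<omega>. (G \<omega> x \<bullet> i) * (G \<omega> x \<bullet> j) \<partial>M) = (if i = j then \<beta> / real DIM('a) else 0)"
  shows "(\<integral>\<^sup>+\<omega>. ennreal ((norm (g + lam *\<^sub>R G \<omega> x))\<^sup>2) \<partial>M) = ennreal ((norm g)\<^sup>2 + lam\<^sup>2 * \<beta>)"
proof -
  interpret prob_space M by fact
  have Gi: "\<And>i. i \<in> Basis \<Longrightarrow> integrable M (\<lambda>\<omega>. G \<omega> x \<bullet> i)"
    using square_integrable_imp_integrable Gm Gsq by blast
  have nsq: "\<And>v::'a. (norm v)\<^sup>2 = (\<Sum>b\<in>Basis. (v \<bullet> b)\<^sup>2)"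
  proof -
    fix v :: 'a
    have "(norm v)\<^sup>2 = v \<bullet> v" by (rule power2_norm_eq_inner)
    also have "\<dots> = (\<Sum>b\<in>Basis. (v \<bullet> b)\<^sup>2)" by (subst euclidean_inner) (simp add: power2_eq_square)
    finally show "?thesis v" .
  qed
  have eq: "\<And>\<omega>. (norm (g + lam *\<^sub>R G \<omega> x))\<^sup>2 =
     (\<Sum>b\<in>Basis. (g \<bullet> b)\<^sup>2 + (2 * lam * (g \<bullet> b)) * (G \<omega> x \<bullet> b) + lam\<^sup>2 * (G \<omega> x \<bullet> b)\<^sup>2)"
    unfolding nsq by (intro sum.cong refl) (simp add: inner_add_left power2_eq_square algebra_simps)
  have Ib: "\<And>b. b \<in> Basis \<Longrightarrow> integrable M (\<lambda>\<omega>. (g \<bullet> b)\<^sup>2 + (2 * lam * (g \<bullet> b)) * (G \<omega> x \<bullet> b) + lam\<^sup>2 * (G \<omega> x \<bullet> b)\<^sup>2)"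
    using Gi Gsq by auto
  have Vb: "\<And>b. b \<in> Basis \<Longrightarrow> (\<integral>\<omega>. (g \<bullet> b)\<^sup>2 + (2 * lam * (g \<bullet> b)) * (G \<omega> x \<bullet> b) + lam\<^sup>2 * (G \<omega> x \<bullet> b)\<^sup>2 \<partial>M)
        = (g \<bullet> b)\<^sup>2 + lam\<^sup>2 * (\<beta> / real DIM('a))"
  proof -
    fix b :: 'a assume b: "b \<in> Basis"
    have "(\<integral>\<omega>. (G \<omega> x \<bullet> b)\<^sup>2 \<partial>M) = \<beta> / real DIM('a)"
      using gcov b by (simp add: power2_eq_square)
    then show "?thesis b" using Gi[OF b] Gsq[OF b] G0[OF b] by (simp add: prob_space)
  qed
  have "(\<integral>\<^sup>+\<omega>. ennreal ((norm (g + lam *\<^sub>R G \<omega> x))\<^sup>2) \<partial>M) = ennreal (\<integral>\<omega>. (norm (g + lam *\<^sub>R G \<omega> x))\<^sup>2 \<partial>M)"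
  proof -
    have "integrable M (\<lambda>\<omega>. (norm (g + lam *\<^sub>R G \<omega> x))\<^sup>2)"
      unfolding eq using Ib by (intro Bochner_Integration.integrable_sum) auto
    then show ?thesis by (intro nn_integral_eq_integral) auto
  qed
  also have "(\<integral>\<omega>. (norm (g + lam *\<^sub>R G \<omega> x))\<^sup>2 \<partial>M) = (\<Sum>b\<in>Basis. (g \<bullet> b)\<^sup>2 + lam\<^sup>2 * (\<beta> / real DIM('a)))"
    unfolding eq using Ib Vb by (simp add: Bochner_Integration.integral_sum)
  also have "\<dots> = (norm g)\<^sup>2 + lam\<^sup>2 * \<beta>"
    by (simp add: sum.distrib nsq[of g])
  finally show ?thesis .
qed

lemma pw_F:
  fixes F :: "'w \<Rightarrow> 'a \<Rightarrow> real"
  assumes P: "prob_space M"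
    and Fi: "integrable M (\<lambda>\<omega>. F \<omega> x)" and F0: "(\<integral>\<omega>. F \<omega> x \<partial>M) = 0"
    and Fsq: "integrable M (\<lambda>\<omega>. (F \<omega> x)\<^sup>2)"
    and var: "(\<integral>\<omega>. F \<omega> x * F \<omega> x \<partial>M) = \<alpha>"
  shows "(\<integral>\<^sup>+\<omega>. ennreal ((p + lam * F \<omega> x)\<^sup>2) \<partial>M) = ennreal (p\<^sup>2 + lam\<^sup>2 * \<alpha>)"
proof -
  interpret prob_space M by fact
  have eq: "\<And>\<omega>. (p + lam * F \<omega> x)\<^sup>2 = p\<^sup>2 + (2*lam*p) * F \<omega> x + lam\<^sup>2 * (F \<omega> x)\<^sup>2"
    by (simp add: power2_eq_square algebra_simps)
  have I: "integrable M (\<lambda>\<omega>. p\<^sup>2 + (2*lam*p) * F \<omega> x + lam\<^sup>2 * (F \<omega> x)\<^sup>2)"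
    using Fi Fsq by auto
  have V: "(\<integral>\<omega>. (F \<omega> x)\<^sup>2 \<partial>M) = \<alpha>" using var by (simp add: power2_eq_square)
  have "(\<integral>\<^sup>+\<omega>. ennreal ((p + lam * F \<omega> x)\<^sup>2) \<partial>M) = (\<integral>\<^sup>+\<omega>. ennreal (p\<^sup>2 + (2*lam*p) * F \<omega> x + lam\<^sup>2 * (F \<omega> x)\<^sup>2) \<partial>M)"
    by (simp only: eq)
  also have "\<dots> = ennreal (\<integral>\<omega>. p\<^sup>2 + (2*lam*p) * F \<omega> x + lam\<^sup>2 * (F \<omega> x)\<^sup>2 \<partial>M)"
    using I by (intro nn_integral_eq_integral) (auto simp: eq[symmetric])
  also have "(\<integral>\<omega>. p\<^sup>2 + (2*lam*p) * F \<omega> x + lam\<^sup>2 * (F \<omega> x)\<^sup>2 \<partial>M) = p\<^sup>2 + lam\<^sup>2 * \<alpha>"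
    using Fi Fsq F0 V by (simp add: prob_space)
  finally show ?thesis .
qed


theorem lemma3p15:
  fixes M :: "'w measure" and F :: "'w \<Rightarrow> 'a::euclidean_space \<Rightarrow> real"
    and G :: "'w \<Rightarrow> 'a \<Rightarrow> 'a" and \<psi> :: "'a \<Rightarrow> real"
    and R \<alpha> \<beta> lam :: real
  assumes "prob_space M"
    and "R > 0" and "\<alpha> > 0" and "lam > 0"
    and harm: "harmonic_on (ball 0 (2*R)) \<psi>"
    and cacc: "(\<integral>\<^sup>+x\<in>ball 0 R. ennreal ((norm (grad \<psi> x))\<^sup>2) \<partial>lborel)
               \<le> ennreal (4 / R\<^sup>2) * (\<integral>\<^sup>+x\<in>ball 0 (2*R) - ball 0 R. ennreal ((\<psi> x)\<^sup>2) \<partial>lborel)"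
    and meas_F: "(\<lambda>(\<omega>, x). F \<omega> x) \<in> borel_measurable (M \<Otimes>\<^sub>M lborel)"
    and meas_G: "(\<lambda>(\<omega>, x). G \<omega> x) \<in> borel_measurable (M \<Otimes>\<^sub>M lborel)"
    and gauss: "gaussian_field M (ball 0 (2*R)) F"
    and msd: "ms_gradient M (ball 0 (2*R)) F G"
    and mean0: "\<forall>x\<in>ball 0 (2*R). integrable M (\<lambda>\<omega>. F \<omega> x) \<and> (\<integral>\<omega>. F \<omega> x \<partial>M) = 0"
    and var: "\<forall>x\<in>ball 0 (2*R). (\<integral>\<omega>. F \<omega> x * F \<omega> x \<partial>M) = \<alpha>"
    and gcov: "\<forall>x\<in>ball 0 (2*R). \<forall>i\<in>Basis. \<forall>j\<in>Basis.
                 (\<integral>\<omega>. (G \<omega> x \<bullet> i) * (G \<omega> x \<bullet> j) \<partial>M) = (if i = j then \<beta> / real DIM('a) else 0)"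
    and cond: "R\<^sup>2 / 4 * (\<beta> / \<alpha>)
               \<le> measure lborel (ball (0::'a) (2*R) - ball 0 R) / measure lborel (ball (0::'a) R)"
  shows "(\<integral>\<^sup>+\<omega>. (\<integral>\<^sup>+x\<in>ball 0 R. ennreal ((norm (grad \<psi> x + lam *\<^sub>R G \<omega> x))\<^sup>2) \<partial>lborel) \<partial>M)
         \<le> ennreal (4 / R\<^sup>2) *
           (\<integral>\<^sup>+\<omega>. (\<integral>\<^sup>+x\<in>ball 0 (2*R) - ball 0 R. ennreal ((\<psi> x + lam * F \<omega> x)\<^sup>2) \<partial>lborel) \<partial>M)"
proof -
  interpret prob_space M by fact
  interpret PS: pair_sigma_finite M lborel
    by (simp add: pair_sigma_finite_def prob_space_imp_sigma_finite \<open>prob_space M\<close> lborel.sigma_finite_measure_axioms)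
  define B where "B = ball (0::'a) R"
  define A where "A = ball (0::'a) (2*R) - ball 0 R"
  define S where "S = ball (0::'a) (2*R)"
  have BS: "B \<subseteq> S" and AS: "A \<subseteq> S" unfolding A_def B_def S_def using \<open>R > 0\<close> by auto
  have [measurable]: "B \<in> sets lborel" "A \<in> sets lborel" "S \<in> sets borel" "B \<in> sets borel" "A \<in> sets borel" unfolding A_def B_def S_def by auto
  have mF: "(\<lambda>p. F (fst p) (snd p)) \<in> borel_measurable (M \<Otimes>\<^sub>M lborel)"
    using meas_F by (simp add: case_prod_beta')
  have mG: "(\<lambda>p. G (fst p) (snd p)) \<in> borel_measurable (M \<Otimes>\<^sub>M lborel)"
    using meas_G by (simp add: case_prod_beta')
  have Fm: "\<And>y. (\<lambda>\<omega>. F \<omega> y) \<in> borel_measurable M"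
    using measurable_compose[OF measurable_Pair2'[of _ lborel M] mF] by simp
  have Gm0: "\<And>y. (\<lambda>\<omega>. G \<omega> y) \<in> borel_measurable M"
    using measurable_compose[OF measurable_Pair2'[of _ lborel M] mG] by simp
  have Gm: "\<And>y i. (\<lambda>\<omega>. G \<omega> y \<bullet> i) \<in> borel_measurable M"
    using Gm0 by measurable
  have G0: "\<And>x i. x \<in> S \<Longrightarrow> i \<in> Basis \<Longrightarrow> (\<integral>\<omega>. G \<omega> x \<bullet> i \<partial>M) = 0"
    using meanzero_grad[OF \<open>prob_space M\<close> _ _ _ Fm Gm msd[folded S_def] mean0[folded S_def]]
    unfolding S_def by auto
  have PG: "\<And>x g. x \<in> S \<Longrightarrow> (\<integral>\<^sup>+\<omega>. ennreal ((norm (g + lam *\<^sub>R G \<omega> x))\<^sup>2) \<partial>M) = ennreal ((norm g)\<^sup>2 + lam\<^sup>2 * \<beta>)"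
  proof -
    fix x g assume x: "x \<in> S"
    show "?thesis x g"
    proof (rule pw_G[OF \<open>prob_space M\<close> Gm])
      show "\<And>i. i \<in> Basis \<Longrightarrow> integrable M (\<lambda>\<omega>. (G \<omega> x \<bullet> i)\<^sup>2)"
        using msd x unfolding ms_gradient_def S_def by blast
      show "\<And>i. i \<in> Basis \<Longrightarrow> (\<integral>\<omega>. G \<omega> x \<bullet> i \<partial>M) = 0" using G0 x by blast
      show "\<forall>i\<in>Basis. \<forall>j\<in>Basis. (\<integral>\<omega>. (G \<omega> x \<bullet> i) * (G \<omega> x \<bullet> j) \<partial>M) = (if i = j then \<beta> / real DIM('a) else 0)"
        using gcov x unfolding S_def by blast
    qed
  qed
  have PF: "\<And>x p. x \<in> S \<Longrightarrow> (\<integral>\<^sup>+\<omega>. ennreal ((p + lam * F \<omega> x)\<^sup>2) \<partial>M) = ennreal (p\<^sup>2 + lam\<^sup>2 * \<alpha>)"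
  proof -
    fix x p assume x: "x \<in> S"
    show "?thesis x p"
      by (rule pw_F[OF \<open>prob_space M\<close>]) (use mean0 msd var x in \<open>auto simp: ms_gradient_def S_def\<close>)
  qed
  have hS: "open S" and dpsi: "\<forall>x\<in>S. \<psi> differentiable (at x)" and dgrad: "\<forall>x\<in>S. grad \<psi> differentiable (at x)"
    using harm unfolding harmonic_on_def S_def by auto
  have cpsi: "continuous_on S \<psi>"
    using dpsi by (intro continuous_at_imp_continuous_on) (auto intro: differentiable_imp_continuous_within)
  have cgrad: "continuous_on S (grad \<psi>)"
    using dgrad by (intro continuous_at_imp_continuous_on) (auto intro: differentiable_imp_continuous_within)
  define gp where "gp = (\<lambda>x. indicator S x *\<^sub>R grad \<psi> x)"
  define ps where "ps = (\<lambda>x. indicator S x *\<^sub>R \<psi> x)"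
  have [measurable]: "gp \<in> borel_measurable lborel"
    unfolding gp_def using borel_measurable_continuous_on_indicator[OF _ cgrad] by simp
  have [measurable]: "ps \<in> borel_measurable lborel"
    unfolding ps_def using borel_measurable_continuous_on_indicator[OF _ cpsi] by simp
  have gpS: "\<And>x. x \<in> S \<Longrightarrow> gp x = grad \<psi> x" unfolding gp_def by simp
  have psS: "\<And>x. x \<in> S \<Longrightarrow> ps x = \<psi> x" unfolding ps_def by simp
  have beta0: "\<beta> \<ge> 0"
  proof -
    obtain i :: 'a where i: "i \<in> Basis" using nonempty_Basis by blast
    have "0 \<in> S" unfolding S_def using \<open>R > 0\<close> by simp
    then have "(\<integral>\<omega>. (G \<omega> 0 \<bullet> i) * (G \<omega> 0 \<bullet> i) \<partial>M) = \<beta> / real DIM('a)"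
      using gcov i unfolding S_def by auto
    moreover have "(\<integral>\<omega>. (G \<omega> 0 \<bullet> i) * (G \<omega> 0 \<bullet> i) \<partial>M) \<ge> 0" by (simp add: integral_nonneg_AE)
    ultimately show ?thesis by (simp add: zero_le_divide_iff)
  qed
  have L1: "(\<integral>\<^sup>+\<omega>. (\<integral>\<^sup>+x\<in>ball 0 R. ennreal ((norm (grad \<psi> x + lam *\<^sub>R G \<omega> x))\<^sup>2) \<partial>lborel) \<partial>M)
     = (\<integral>\<^sup>+\<omega>. (\<integral>\<^sup>+x. ennreal ((norm (gp x + lam *\<^sub>R G \<omega> x))\<^sup>2) * indicator B x \<partial>lborel) \<partial>M)"
    unfolding B_def[symmetric] using BS gpS
    by (intro nn_integral_cong) (auto split: split_indicator)
  also have "\<dots> = (\<integral>\<^sup>+x. (\<integral>\<^sup>+\<omega>. ennreal ((norm (gp x + lam *\<^sub>R G \<omega> x))\<^sup>2) * indicator B x \<partial>M) \<partial>lborel)"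
    by (rule PS.Fubini'[symmetric]) (use mG in measurable)
  also have "\<dots> = (\<integral>\<^sup>+x. ennreal ((norm (gp x))\<^sup>2 + lam\<^sup>2 * \<beta>) * indicator B x \<partial>lborel)"
    using BS PG by (intro nn_integral_cong) (auto split: split_indicator)
  also have "\<dots> = (\<integral>\<^sup>+x. ennreal ((norm (gp x))\<^sup>2) * indicator B x + ennreal (lam\<^sup>2 * \<beta>) * indicator B x \<partial>lborel)"
  proof (intro nn_integral_cong)
    fix x
    have "ennreal ((norm (gp x))\<^sup>2 + lam\<^sup>2 * \<beta>) = ennreal ((norm (gp x))\<^sup>2) + ennreal (lam\<^sup>2 * \<beta>)"
      using beta0 by (intro ennreal_plus) auto
    then show "ennreal ((norm (gp x))\<^sup>2 + lam\<^sup>2 * \<beta>) * indicator B x = ennreal ((norm (gp x))\<^sup>2) * indicator B x + ennreal (lam\<^sup>2 * \<beta>) * indicator B x"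
      by (simp only: distrib_right)
  qed
  also have "\<dots> = (\<integral>\<^sup>+x. ennreal ((norm (gp x))\<^sup>2) * indicator B x \<partial>lborel) + ennreal (lam\<^sup>2 * \<beta>) * emeasure lborel B"
    by (subst nn_integral_add) (auto intro!: nn_integral_cmult_indicator)
  finally have LHS: "(\<integral>\<^sup>+\<omega>. (\<integral>\<^sup>+x\<in>ball 0 R. ennreal ((norm (grad \<psi> x + lam *\<^sub>R G \<omega> x))\<^sup>2) \<partial>lborel) \<partial>M)
     = (\<integral>\<^sup>+x. ennreal ((norm (gp x))\<^sup>2) * indicator B x \<partial>lborel) + ennreal (lam\<^sup>2 * \<beta>) * emeasure lborel B" .
  have R1: "(\<integral>\<^sup>+\<omega>. (\<integral>\<^sup>+x\<in>ball 0 (2*R) - ball 0 R. ennreal ((\<psi> x + lam * F \<omega> x)\<^sup>2) \<partial>lborel) \<partial>M)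
     = (\<integral>\<^sup>+\<omega>. (\<integral>\<^sup>+x. ennreal ((ps x + lam * F \<omega> x)\<^sup>2) * indicator A x \<partial>lborel) \<partial>M)"
    unfolding A_def[symmetric] using AS psS
    by (intro nn_integral_cong) (auto split: split_indicator)
  also have "\<dots> = (\<integral>\<^sup>+x. (\<integral>\<^sup>+\<omega>. ennreal ((ps x + lam * F \<omega> x)\<^sup>2) * indicator A x \<partial>M) \<partial>lborel)"
    by (rule PS.Fubini'[symmetric]) (use mF in measurable)
  also have "\<dots> = (\<integral>\<^sup>+x. ennreal ((ps x)\<^sup>2 + lam\<^sup>2 * \<alpha>) * indicator A x \<partial>lborel)"
    using AS PF by (intro nn_integral_cong) (auto split: split_indicator)
  also have "\<dots> = (\<integral>\<^sup>+x. ennreal ((ps x)\<^sup>2) * indicator A x + ennreal (lam\<^sup>2 * \<alpha>) * indicator A x \<partial>lborel)"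
  proof (intro nn_integral_cong)
    fix x
    have "ennreal ((ps x)\<^sup>2 + lam\<^sup>2 * \<alpha>) = ennreal ((ps x)\<^sup>2) + ennreal (lam\<^sup>2 * \<alpha>)"
      using \<open>\<alpha> > 0\<close> by (intro ennreal_plus) auto
    then show "ennreal ((ps x)\<^sup>2 + lam\<^sup>2 * \<alpha>) * indicator A x = ennreal ((ps x)\<^sup>2) * indicator A x + ennreal (lam\<^sup>2 * \<alpha>) * indicator A x"
      by (simp only: distrib_right)
  qed
  also have "\<dots> = (\<integral>\<^sup>+x. ennreal ((ps x)\<^sup>2) * indicator A x \<partial>lborel) + ennreal (lam\<^sup>2 * \<alpha>) * emeasure lborel A"
    by (subst nn_integral_add) (auto intro!: nn_integral_cmult_indicator)
  finally have RHS: "(\<integral>\<^sup>+\<omega>. (\<integral>\<^sup>+x\<in>ball 0 (2*R) - ball 0 R. ennreal ((\<psi> x + lam * F \<omega> x)\<^sup>2) \<partial>lborel) \<partial>M)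
     = (\<integral>\<^sup>+x. ennreal ((ps x)\<^sup>2) * indicator A x \<partial>lborel) + ennreal (lam\<^sup>2 * \<alpha>) * emeasure lborel A" .
  have cacc': "(\<integral>\<^sup>+x. ennreal ((norm (gp x))\<^sup>2) * indicator B x \<partial>lborel)
      \<le> ennreal (4 / R\<^sup>2) * (\<integral>\<^sup>+x. ennreal ((ps x)\<^sup>2) * indicator A x \<partial>lborel)"
  proof -
    have e1: "(\<integral>\<^sup>+x. ennreal ((norm (gp x))\<^sup>2) * indicator B x \<partial>lborel) = (\<integral>\<^sup>+x\<in>ball 0 R. ennreal ((norm (grad \<psi> x))\<^sup>2) \<partial>lborel)"
      unfolding B_def[symmetric] using BS gpS by (intro nn_integral_cong) (auto split: split_indicator)
    have e2: "(\<integral>\<^sup>+x. ennreal ((ps x)\<^sup>2) * indicator A x \<partial>lborel) = (\<integral>\<^sup>+x\<in>ball 0 (2*R) - ball 0 R. ennreal ((\<psi> x)\<^sup>2) \<partial>lborel)"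
      unfolding A_def[symmetric] using AS psS by (intro nn_integral_cong) (auto split: split_indicator)
    show ?thesis unfolding e1 e2 by (rule cacc)
  qed
  define mB where "mB = measure lborel B"
  define mA where "mA = measure lborel A"
  have eB: "emeasure lborel B = ennreal mB"
    unfolding mB_def B_def using emeasure_lborel_ball_finite[of "0::'a" R] by (intro emeasure_eq_ennreal_measure) (simp add: less_top)
  have eA: "emeasure lborel A = ennreal mA"
  proof -
    have "emeasure lborel A \<le> emeasure lborel S" using AS by (intro emeasure_mono) auto
    also have "\<dots> < \<infinity>" unfolding S_def by (rule emeasure_lborel_ball_finite)
    finally show ?thesis unfolding mA_def by (intro emeasure_eq_ennreal_measure) auto
  qed
  have mBpos: "mB > 0" unfolding mB_def B_def using \<open>R > 0\<close> by simp
  have mApos: "mA \<ge> 0" unfolding mA_def by simp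
  have key: "lam\<^sup>2 * \<beta> * mB \<le> 4 / R\<^sup>2 * (lam\<^sup>2 * \<alpha> * mA)"
  proof -
    have c: "R\<^sup>2 / 4 * (\<beta> / \<alpha>) \<le> mA / mB" using cond unfolding mA_def mB_def A_def B_def .
    have "R\<^sup>2 / 4 * (\<beta> / \<alpha>) * (4 * \<alpha> * mB / R\<^sup>2) \<le> mA / mB * (4 * \<alpha> * mB / R\<^sup>2)"
      using c \<open>\<alpha> > 0\<close> \<open>R > 0\<close> mBpos by (intro mult_right_mono) auto
    then have "\<beta> * mB \<le> 4 / R\<^sup>2 * (\<alpha> * mA)"
      using \<open>\<alpha> > 0\<close> \<open>R > 0\<close> mBpos by (simp add: field_simps)
    then have "lam\<^sup>2 * (\<beta> * mB) \<le> lam\<^sup>2 * (4 / R\<^sup>2 * (\<alpha> * mA))"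
      by (intro mult_left_mono) auto
    then show ?thesis by (simp add: algebra_simps)
  qed
  have "ennreal (lam\<^sup>2 * \<beta>) * emeasure lborel B \<le> ennreal (4 / R\<^sup>2) * (ennreal (lam\<^sup>2 * \<alpha>) * emeasure lborel A)"
    unfolding eA eB using key beta0 mApos mBpos \<open>\<alpha> > 0\<close>
    by (simp add: ennreal_mult'[symmetric] ennreal_mult''[symmetric] ennreal_leI)
  then show ?thesis unfolding LHS RHS distrib_left
    by (intro add_mono cacc')
qed

end
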